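(* Let $P$ be a finite poset, let $L=\mathcal{F}(P)$, and let $K=[\hat0_K,\hat1_K]$ be an interval of $L$ (so $\hat1_K\subseteq\hat0_K$ as filters of $P$). Put $S=\hat0_K\setminus\hat1_K$, let $S_0$ be the set of maximal elements of $P\setminus\hat0_K$, and let $S_1$ be the set of minimal elements of $\hat1_K$. Then the following are equivalent: (1) $L={\uparrow\hat0_K}\cup{\downarrow\hat1_K}$, where ${\uparrow\hat0_K}=\{a\in L: a\ge \hat0_K\}$ and ${\downarrow\hat1_K}=\{a\in L: a\le\hat1_K\}$; (2) $K$ is a cutting of $L$; (3) $z<y$ in $P$ for all $z\in S_0$ and all $y\in S_1$; (4) for a new element $x_K\notin P$ there exists a partial order on $P\cup\{x_K\}$ which restricts to the order of $P$ on $P$, in which $x_K$ covers every element of $S_0$ and is covered by every element of $S_1$, and such that the set of elements of $P\cup\{x_K\}$ that are incomparable to $x_K$ is exactly $S$.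
   Context: For a finite poset $P$, a filter is an up-closed subset of $P$. $\mathcal{F}(P)$ denotes the set of all filters of $P$ ordered by reverse inclusion ($F\le G$ iff $F\supseteq G$); it is a finite distributive lattice with least element $P$ and greatest element $\emptyset$. A cutting of a finite distributive lattice $L$ is an interval (convex sublattice) $K$ of $L$ such that every maximal chain of $L$ contains at least one element of $K$. *)

theory Defs
  imports Main
begin

text \<open>A finite poset is modelled as a finite subset P of a type with a partial order,
  carrying the induced order.\<close>

definition filters :: "'a::order set \<Rightarrow> 'a set set" where
  "filters P = {F. F \<subseteq> P \<and> (\<forall>x\<in>F. \<forall>y\<in>P. x \<le> y \<longrightarrow> y \<in> F)}"

text \<open>The lattice F(P) is ordered by reverse inclusion: F \<le> G iff G \<subseteq> F.
  The interval [a,b] (a \<le> b in F(P), i.e. b \<subseteq> a) is therefore:\<close>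
definition filt_interval :: "'a::order set \<Rightarrow> 'a set \<Rightarrow> 'a set \<Rightarrow> 'a set set" where
  "filt_interval P a b = {F \<in> filters P. b \<subseteq> F \<and> F \<subseteq> a}"

definition filt_up :: "'a::order set \<Rightarrow> 'a set \<Rightarrow> 'a set set" where
  "filt_up P a = {F \<in> filters P. F \<subseteq> a}"

definition filt_down :: "'a::order set \<Rightarrow> 'a set \<Rightarrow> 'a set set" where
  "filt_down P b = {F \<in> filters P. b \<subseteq> F}"

text \<open>Maximal chains of F(P); chains for reverse inclusion coincide with chains for inclusion.\<close>
definition max_chains_filt :: "'a::order set \<Rightarrow> 'a set set set" where
  "max_chains_filt P = {C. subset.maxchain (filters P) C}"

definition is_cutting :: "'a::order set \<Rightarrow> 'a set set \<Rightarrow> bool" where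
  "is_cutting P K \<longleftrightarrow> (\<exists>a b. a \<in> filters P \<and> b \<in> filters P \<and> b \<subseteq> a \<and> K = filt_interval P a b)
     \<and> (\<forall>C \<in> max_chains_filt P. C \<inter> K \<noteq> {})"

definition maximals :: "'a::order set \<Rightarrow> 'a set" where
  "maximals X = {z \<in> X. \<not> (\<exists>w\<in>X. z < w)}"

definition minimals :: "'a::order set \<Rightarrow> 'a set" where
  "minimals X = {z \<in> X. \<not> (\<exists>w\<in>X. w < z)}"

definition partial_order_on_rel :: "'b set \<Rightarrow> ('b \<Rightarrow> 'b \<Rightarrow> bool) \<Rightarrow> bool" where
  "partial_order_on_rel X R \<longleftrightarrow>
     (\<forall>x\<in>X. R x x) \<and>
     (\<forall>x\<in>X. \<forall>y\<in>X. R x y \<and> R y x \<longrightarrow> x = y) \<and>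
     (\<forall>x\<in>X. \<forall>y\<in>X. \<forall>z\<in>X. R x y \<and> R y z \<longrightarrow> R x z)"

definition covers_rel :: "'b set \<Rightarrow> ('b \<Rightarrow> 'b \<Rightarrow> bool) \<Rightarrow> 'b \<Rightarrow> 'b \<Rightarrow> bool" where
  "covers_rel X R y x \<longleftrightarrow> x \<in> X \<and> y \<in> X \<and> R x y \<and> x \<noteq> y \<and>
     \<not> (\<exists>w\<in>X. R x w \<and> R w y \<and> w \<noteq> x \<and> w \<noteq> y)"

end

theory Submission
  imports Defs
begin

lemma filt_mem: "F \<in> filters P \<Longrightarrow> x \<in> F \<Longrightarrow> y \<in> P \<Longrightarrow> x \<le> y \<Longrightarrow> y \<in> F"
  unfolding filters_def by blast

lemma filt_sub: "F \<in> filters P \<Longrightarrow> F \<subseteq> P"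
  unfolding filters_def by blast

lemma sch: "subset.chain A C \<longleftrightarrow> C \<subseteq> A \<and> (\<forall>x\<in>C. \<forall>y\<in>C. x \<subseteq> y \<or> y \<subseteq> x)"
  unfolding subset.chain_def by blast

lemma ex_max:
  fixes X :: "'a::order set"
  assumes "finite X" "x \<in> X"
  shows "\<exists>z\<in>maximals X. x \<le> z"
proof -
  obtain m where "m \<in> X" "x \<le> m" "\<forall>b\<in>X. m \<le> b \<longrightarrow> m = b"
    using finite_has_maximal2[OF assms] by blast
  then show ?thesis unfolding maximals_def by (auto simp: less_le)
qed

lemma ex_min:
  fixes X :: "'a::order set"
  assumes "finite X" "x \<in> X"
  shows "\<exists>z\<in>minimals X. z \<le> x"
proof -
  obtain m where "m \<in> X" "m \<le> x" "\<forall>b\<in>X. b \<le> m \<longrightarrow> m = b"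
    using finite_has_minimal2[OF assms] by blast
  then show ?thesis unfolding minimals_def by (auto simp: less_le)
qed

lemma L12:
  fixes P :: "'a::order set"
  assumes a: "a \<in> filters P" and b: "b \<in> filters P" and ba: "b \<subseteq> a"
    and one: "filters P = filt_up P a \<union> filt_down P b"
    and C: "C \<in> max_chains_filt P"
  shows "C \<inter> filt_interval P a b \<noteq> {}"
proof -
  have mc: "subset.maxchain (filters P) C" using C unfolding max_chains_filt_def by simp
  hence ch: "subset.chain (filters P) C" by (simp add: subset.maxchain_def)
  hence CF: "C \<subseteq> filters P" and tot: "\<And>x y. x \<in> C \<Longrightarrow> y \<in> C \<Longrightarrow> x \<subseteq> y \<or> y \<subseteq> x"
    unfolding subset.chain_def by auto
  define H where "H = P \<inter> \<Inter>{X\<in>C. b \<subseteq> X}"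
  define G where "G = a \<inter> H"
  have Gf: "G \<in> filters P"
    using a CF unfolding G_def H_def filters_def by blast
  have bG: "b \<subseteq> G" using ba filt_sub[OF b] unfolding G_def H_def by blast
  have Ga: "G \<subseteq> a" unfolding G_def by blast
  have comp: "G \<subseteq> X \<or> X \<subseteq> G" if X: "X \<in> C" for X
  proof (cases "b \<subseteq> X")
    case True
    then show ?thesis using X unfolding G_def H_def by blast
  next
    case False
    have "X \<in> filters P" using X CF by blast
    with one False have Xa: "X \<subseteq> a" unfolding filt_up_def filt_down_def by blast
    have "X \<subseteq> Y" if "Y \<in> C" "b \<subseteq> Y" for Y
      using tot[OF X that(1)] that(2) False by blast
    hence "X \<subseteq> H" unfolding H_def using filt_sub \<open>X \<in> filters P\<close> by blast
    then show ?thesis using Xa unfolding G_def by blast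
  qed
  have "G \<in> C"
  proof (rule ccontr)
    assume "G \<notin> C"
    have "subset.chain (filters P) (insert G C)"
      unfolding sch using CF Gf comp tot by blast
    moreover have "C \<subset> insert G C" using \<open>G \<notin> C\<close> by blast
    ultimately show False using mc unfolding subset.maxchain_def by blast
  qed
  moreover have "G \<in> filt_interval P a b" using Gf bG Ga unfolding filt_interval_def by blast
  ultimately show ?thesis by blast
qed

lemma L23:
  fixes P :: "'a::order set"
  assumes a: "a \<in> filters P" and b: "b \<in> filters P" and ba: "b \<subseteq> a"
    and cut: "\<forall>C \<in> max_chains_filt P. C \<inter> filt_interval P a b \<noteq> {}"
    and z: "z \<in> maximals (P - a)" and y: "y \<in> minimals b"
  shows "z < y"
proof (rule ccontr)
  assume nzy: "\<not> z < y"
  have zP: "z \<in> P" "z \<notin> a" using z unfolding maximals_def by auto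
  have yb: "y \<in> b" using y unfolding minimals_def by auto
  have "z \<noteq> y" using zP yb ba by blast
  hence nle: "\<not> z \<le> y" using nzy by auto
  define U where "U = {x\<in>P. z \<le> x}"
  have Uf: "U \<in> filters P" unfolding U_def filters_def using order_trans by blast
  define A where "A = {F \<in> filters P. F \<subseteq> U \<or> U \<subseteq> F}"
  obtain M where M: "subset.maxchain A M" using subset.Hausdorff by blast
  hence Mch: "subset.chain A M" by (simp add: subset.maxchain_def)
  hence MA: "M \<subseteq> A" and tot: "\<And>x y. x \<in> M \<Longrightarrow> y \<in> M \<Longrightarrow> x \<subseteq> y \<or> y \<subseteq> x"
    unfolding subset.chain_def by auto
  have UA: "U \<in> A" using Uf unfolding A_def by blast
  have UM: "U \<in> M"
  proof (rule ccontr)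
    assume "U \<notin> M"
    have "subset.chain A (insert U M)"
      unfolding sch using MA UA tot unfolding A_def by blast
    moreover have "M \<subset> insert U M" using \<open>U \<notin> M\<close> by blast
    ultimately show False using M unfolding subset.maxchain_def by blast
  qed
  have "subset.maxchain (filters P) M"
    unfolding subset.maxchain_def
  proof (intro conjI notI)
    show "subset.chain (filters P) M" using MA tot unfolding sch A_def by blast
  next
    assume "\<exists>S. subset.chain (filters P) S \<and> M \<subset> S"
    then obtain S where S: "subset.chain (filters P) S" "M \<subset> S" by blast
    have "S \<subseteq> A" using S UM unfolding subset.chain_def A_def by blast
    hence "subset.chain A S" using S unfolding subset.chain_def by blast
    then show False using S(2) M unfolding subset.maxchain_def by blast
  qed
  hence "M \<in> max_chains_filt P" unfolding max_chains_filt_def by simp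
  with cut obtain F where F: "F \<in> M" "F \<in> filt_interval P a b" by blast
  have "F \<subseteq> U \<or> U \<subseteq> F" using F(1) MA unfolding A_def by blast
  moreover have "y \<notin> U" using nle unfolding U_def by blast
  moreover have "z \<in> U" using zP unfolding U_def by blast
  ultimately show False using F(2) yb zP unfolding filt_interval_def by blast
qed

lemma L31:
  fixes P :: "'a::order set"
  assumes fin: "finite P" and a: "a \<in> filters P" and b: "b \<in> filters P" and ba: "b \<subseteq> a"
    and three: "\<forall>z\<in>maximals (P - a). \<forall>y\<in>minimals b. z < y"
  shows "filters P = filt_up P a \<union> filt_down P b"
proof
  show "filt_up P a \<union> filt_down P b \<subseteq> filters P" unfolding filt_up_def filt_down_def by blast
next
  show "filters P \<subseteq> filt_up P a \<union> filt_down P b"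
  proof
    fix F assume F: "F \<in> filters P"
    show "F \<in> filt_up P a \<union> filt_down P b"
    proof (rule ccontr)
      assume "F \<notin> filt_up P a \<union> filt_down P b"
      then obtain x y' where x: "x \<in> F" "x \<notin> a" and y': "y' \<in> b" "y' \<notin> F"
        using F unfolding filt_up_def filt_down_def by blast
      have xP: "x \<in> P - a" using x filt_sub[OF F] by blast
      obtain z where z: "z \<in> maximals (P - a)" "x \<le> z" using ex_max[OF _ xP] fin by blast
      have bfin: "finite b" using filt_sub[OF b] fin finite_subset by blast
      obtain y where y: "y \<in> minimals b" "y \<le> y'" using ex_min[OF bfin y'(1)] by blast
      have zP: "z \<in> P" using z unfolding maximals_def by blast
      have yP: "y \<in> P" using y filt_sub[OF b] unfolding minimals_def by blast
      have "z \<in> F" using filt_mem[OF F x(1) zP z(2)] .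
      hence "y \<in> F" using filt_mem[OF F _ yP] three z(1) y(1) less_imp_le by blast
      hence "y' \<in> F" using filt_mem[OF F _ _ y(2)] y' filt_sub[OF b] by blast
      then show False using y' by blast
    qed
  qed
qed

lemma L34:
  fixes P :: "'a::order set"
  assumes fin: "finite P" and a: "a \<in> filters P" and b: "b \<in> filters P" and ba: "b \<subseteq> a"
    and three: "\<forall>z\<in>maximals (P - a). \<forall>y\<in>minimals b. z < y"
  shows "\<exists>R :: 'a option \<Rightarrow> 'a option \<Rightarrow> bool.
             partial_order_on_rel (insert None (Some ` P)) R
           \<and> (\<forall>x\<in>P. \<forall>y\<in>P. R (Some x) (Some y) \<longleftrightarrow> x \<le> y)
           \<and> (\<forall>z\<in>maximals (P - a). covers_rel (insert None (Some ` P)) R None (Some z))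
           \<and> (\<forall>y\<in>minimals b. covers_rel (insert None (Some ` P)) R (Some y) None)
           \<and> {w \<in> insert None (Some ` P). \<not> R w None \<and> \<not> R None w} = Some ` (a - b)"
proof -
  define R where "R = (\<lambda>u v. case (u, v) of
      (Some x, Some y) \<Rightarrow> x \<le> y
    | (Some x, None) \<Rightarrow> x \<notin> a
    | (None, Some y) \<Rightarrow> y \<in> b
    | (None, None) \<Rightarrow> True)"
  have R_simps[simp]: "R (Some x) (Some y) = (x \<le> y)" "R (Some x) None = (x \<notin> a)"
    "R None (Some y) = (y \<in> b)" "R None None" for x y
    unfolding R_def by auto
  have aP: "a \<subseteq> P" and bP: "b \<subseteq> P" using filt_sub a b by auto
  have bfin: "finite b" using bP fin finite_subset by blast
  have key: "x \<le> y" if kx: "x \<in> P" "x \<notin> a" and ky: "y \<in> b" for x y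
  proof -
    obtain z where z: "z \<in> maximals (P - a)" "x \<le> z" using ex_max[of "P - a" x] fin kx by blast
    obtain y0 where y0: "y0 \<in> minimals b" "y0 \<le> y" using ex_min[OF bfin ky] by blast
    have "z < y0" using three z y0 by blast
    then show ?thesis using z(2) y0(2) by (meson order.trans less_imp_le)
  qed
  let ?X = "insert None (Some ` P)"
  have po: "partial_order_on_rel ?X R"
    unfolding partial_order_on_rel_def
  proof (intro conjI ballI impI)
    fix x assume "x \<in> ?X" then show "R x x" by auto
  next
    fix x y assume "x \<in> ?X" "y \<in> ?X" "R x y \<and> R y x" then show "x = y"
    proof (cases x; cases y)
      fix x' y' assume "x = Some x'" "y = Some y'"
      then show "x = y" using \<open>R x y \<and> R y x\<close> by (simp add: order.antisym)
    next
      fix x' assume "x = Some x'" "y = None"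
      then show "x = y" using \<open>R x y \<and> R y x\<close> ba by auto
    next
      fix y' assume "x = None" "y = Some y'"
      then show "x = y" using \<open>R x y \<and> R y x\<close> ba by auto
    qed simp
  next
    fix x y z assume X: "x \<in> ?X" "y \<in> ?X" "z \<in> ?X" and r: "R x y \<and> R y z"
    show "R x z"
    proof (cases x; cases y; cases z)
      fix y' z' assume e: "x = None" "y = Some y'" "z = Some z'"
      then show ?thesis using r X filt_mem[OF b, of y' z'] by auto
    next
      fix z' assume e: "x = None" "y = None" "z = Some z'"
      then show ?thesis using r by simp
    next
      fix y' assume e: "x = None" "y = Some y'" "z = None"
      then show ?thesis by simp
    next
      fix x' y' z' assume e: "x = Some x'" "y = Some y'" "z = Some z'"
      then show ?thesis using r by (auto intro: order.trans)
    next
      fix x' y' assume e: "x = Some x'" "y = Some y'" "z = None"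
      then show ?thesis using r X filt_mem[OF a, of x' y'] by auto
    next
      fix x' z' assume e: "x = Some x'" "y = None" "z = Some z'"
      then show ?thesis using r X key[of x' z'] by auto
    next
      fix x' assume e: "x = Some x'" "y = None" "z = None"
      then show ?thesis using r by simp
    qed simp
  qed
  show ?thesis
  proof (rule exI[of _ R], intro conjI ballI)
    show "partial_order_on_rel ?X R" by (rule po)
  next
    fix x y assume "x \<in> P" "y \<in> P" then show "R (Some x) (Some y) = (x \<le> y)" by simp
  next
    fix z assume z: "z \<in> maximals (P - a)"
    then show "covers_rel ?X R None (Some z)"
      unfolding covers_rel_def maximals_def by (auto simp: less_le)
  next
    fix y assume y: "y \<in> minimals b"
    then show "covers_rel ?X R (Some y) None"
      using bP unfolding covers_rel_def minimals_def by (auto simp: less_le)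
  next
    show "{w \<in> ?X. \<not> R w None \<and> \<not> R None w} = Some ` (a - b)"
      using aP by auto
  qed
qed

lemma L43:
  fixes P :: "'a::order set"
  assumes ba: "b \<subseteq> a"
    and R: "partial_order_on_rel (insert None (Some ` P)) R"
           "\<forall>x\<in>P. \<forall>y\<in>P. R (Some x) (Some y) \<longleftrightarrow> x \<le> y"
           "\<forall>z\<in>maximals (P - a). covers_rel (insert None (Some ` P)) R None (Some z)"
           "\<forall>y\<in>minimals b. covers_rel (insert None (Some ` P)) R (Some y) None"
  shows "\<forall>z\<in>maximals (P - a). \<forall>y\<in>minimals b. z < y"
proof (intro ballI)
  fix z y assume z: "z \<in> maximals (P - a)" and y: "y \<in> minimals b"
  have c1: "R (Some z) None" "Some z \<in> insert None (Some ` P)"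
    using R(3) z unfolding covers_rel_def by auto
  have c2: "R None (Some y)" "Some y \<in> insert None (Some ` P)"
    using R(4) y unfolding covers_rel_def by auto
  have tr: "\<forall>x\<in>insert None (Some ` P). \<forall>y\<in>insert None (Some ` P). \<forall>z\<in>insert None (Some ` P). R x y \<and> R y z \<longrightarrow> R x z"
    using R(1) unfolding partial_order_on_rel_def by (elim conjE)
  have "R (Some z) (Some y)" using tr c1 c2 insertI1[of None] by meson
  moreover have "z \<in> P" "y \<in> P" using c1 c2 by auto
  ultimately have "z \<le> y" using R(2) by blast
  moreover have "z \<noteq> y" using z y ba unfolding maximals_def minimals_def by blast
  ultimately show "z < y" by simp
qed

theorem theorem2:
  fixes P :: "'a::order set" and a b :: "'a set"
  assumes "finite P"
    and "a \<in> filters P" and "b \<in> filters P" and "b \<subseteq> a"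
  defines "S \<equiv> a - b"
    and "S0 \<equiv> maximals (P - a)"
    and "S1 \<equiv> minimals b"
  shows
    "(filters P = filt_up P a \<union> filt_down P b
       \<longleftrightarrow> is_cutting P (filt_interval P a b))
   \<and> (is_cutting P (filt_interval P a b)
       \<longleftrightarrow> (\<forall>z\<in>S0. \<forall>y\<in>S1. z < y))
   \<and> ((\<forall>z\<in>S0. \<forall>y\<in>S1. z < y)
       \<longleftrightarrow> (\<exists>R :: 'a option \<Rightarrow> 'a option \<Rightarrow> bool.
             partial_order_on_rel (insert None (Some ` P)) R
           \<and> (\<forall>x\<in>P. \<forall>y\<in>P. R (Some x) (Some y) \<longleftrightarrow> x \<le> y)
           \<and> (\<forall>z\<in>S0. covers_rel (insert None (Some ` P)) R None (Some z))
           \<and> (\<forall>y\<in>S1. covers_rel (insert None (Some ` P)) R (Some y) None)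
           \<and> {w \<in> insert None (Some ` P). \<not> R w None \<and> \<not> R None w} = Some ` S))"
proof -
  have cut_iff: "is_cutting P (filt_interval P a b) \<longleftrightarrow>
      (\<forall>C \<in> max_chains_filt P. C \<inter> filt_interval P a b \<noteq> {})"
  proof -
    have "\<exists>a' b'. a' \<in> filters P \<and> b' \<in> filters P \<and> b' \<subseteq> a' \<and> filt_interval P a b = filt_interval P a' b'"
      by (rule exI[of _ a], rule exI[of _ b]) (use assms(2-4) in simp)
    then show ?thesis unfolding is_cutting_def
      by (intro iffI; (elim conjE)?) (assumption, rule conjI, assumption+)
  qed
  have i12: "filters P = filt_up P a \<union> filt_down P b \<Longrightarrow> is_cutting P (filt_interval P a b)"
    unfolding cut_iff by (intro ballI L12[OF assms(2-4)])
  have i23: "is_cutting P (filt_interval P a b) \<Longrightarrow> (\<forall>z\<in>S0. \<forall>y\<in>S1. z < y)"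
    unfolding cut_iff S0_def S1_def using L23[OF assms(2-4)] by blast
  have i31: "(\<forall>z\<in>S0. \<forall>y\<in>S1. z < y) \<Longrightarrow> filters P = filt_up P a \<union> filt_down P b"
    unfolding S0_def S1_def using L31[OF assms(1-4)] by blast
  have i34: "(\<forall>z\<in>S0. \<forall>y\<in>S1. z < y) \<Longrightarrow> (\<exists>R :: 'a option \<Rightarrow> 'a option \<Rightarrow> bool.
             partial_order_on_rel (insert None (Some ` P)) R
           \<and> (\<forall>x\<in>P. \<forall>y\<in>P. R (Some x) (Some y) \<longleftrightarrow> x \<le> y)
           \<and> (\<forall>z\<in>S0. covers_rel (insert None (Some ` P)) R None (Some z))
           \<and> (\<forall>y\<in>S1. covers_rel (insert None (Some ` P)) R (Some y) None)
           \<and> {w \<in> insert None (Some ` P). \<not> R w None \<and> \<not> R None w} = Some ` S)"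
    unfolding S0_def S1_def S_def by (rule L34[OF assms(1-4)])
  have i43: "(\<exists>R :: 'a option \<Rightarrow> 'a option \<Rightarrow> bool.
             partial_order_on_rel (insert None (Some ` P)) R
           \<and> (\<forall>x\<in>P. \<forall>y\<in>P. R (Some x) (Some y) \<longleftrightarrow> x \<le> y)
           \<and> (\<forall>z\<in>S0. covers_rel (insert None (Some ` P)) R None (Some z))
           \<and> (\<forall>y\<in>S1. covers_rel (insert None (Some ` P)) R (Some y) None)
           \<and> {w \<in> insert None (Some ` P). \<not> R w None \<and> \<not> R None w} = Some ` S)
        \<Longrightarrow> (\<forall>z\<in>S0. \<forall>y\<in>S1. z < y)"
    unfolding S0_def S1_def by (elim exE conjE) (rule L43[OF assms(4)])
  show ?thesis
    apply (intro conjI iffI)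
         apply (erule i12)
        apply (erule i31[OF i23])
       apply (erule i23)
      apply (erule i12[OF i31])
     apply (erule i34)
    apply (erule i43)
    done
qed

end
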